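(* Let $m>0$, $h\ge0$ and $\theta>0$, and let $g(u)=\bar\Psi_{m+h}\big(\theta\,\bar\Psi_m^{-1}(u)\big)$ for $u\in(0,1)$. If $\theta\le1$, then $g$ is concave on $(0,1)$; if $\theta>1$ and $h=0$, then $g$ is convex on $(0,1)$.
   Context: $\Psi_k$ denotes the CDF of the (central) chi-squared distribution with $k$ degrees of freedom, $\bar\Psi_k=1-\Psi_k$ its survival function, and $\bar\Psi_k^{-1}:(0,1)\to(0,\infty)$ the inverse of $\bar\Psi_k$. *)

theory Defs
  imports "HOL-Analysis.Analysis"
begin

definition chi2_density :: "real \<Rightarrow> real \<Rightarrow> real" where
  "chi2_density k t =
     (if t > 0 then t powr (k/2 - 1) * exp (- t/2) / (2 powr (k/2) * Gamma (k/2)) else 0)"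

definition chi2_CDF :: "real \<Rightarrow> real \<Rightarrow> real" where
  "chi2_CDF k x = (LINT t:{..x}|lborel. chi2_density k t)"

definition chi2_surv :: "real \<Rightarrow> real \<Rightarrow> real" where
  "chi2_surv k x = 1 - chi2_CDF k x"

definition chi2_surv_inv :: "real \<Rightarrow> real \<Rightarrow> real" where
  "chi2_surv_inv k u = (THE x. x > 0 \<and> chi2_surv k x = u)"

end

theory Submission
  imports Defs
begin

lemma chi2_density_nonneg: "k > 0 \<Longrightarrow> chi2_density k x \<ge> 0"
  unfolding chi2_density_def by (auto intro!: divide_nonneg_pos mult_nonneg_nonneg mult_pos_pos Gamma_real_pos)

lemma chi2_density_meas[measurable]: "chi2_density k \<in> borel_measurable borel"
  unfolding chi2_density_def by measurable

definition GG :: "real \<Rightarrow> real \<Rightarrow> real" where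
  "GG a t = (if t \<ge> 0 then t powr (a - 1) / exp t else 0)"

lemma GG_meas[measurable]: "GG a \<in> borel_measurable borel"
  unfolding GG_def by measurable

lemma chi2_density_scale:
  assumes "k > 0"
  shows "chi2_density k x = GG (k/2) (x/2) / (2 * Gamma (k/2))"
proof -
  have G: "Gamma (k/2) > 0" using assms by (simp add: Gamma_real_pos)
  have p: "2 powr (k/2) = 2 * 2 powr (k/2 - 1)"
    by (simp add: powr_diff)
  show ?thesis
  proof (cases "x > 0")
    case True
    then show ?thesis using G unfolding chi2_density_def GG_def
      by (simp add: powr_divide p exp_minus field_simps)
  next
    case False
    then show ?thesis unfolding chi2_density_def GG_def by auto
  qed
qed

lemma GG_nn: assumes "a > 0" shows "(\<integral>\<^sup>+x. ennreal (GG a x) \<partial>lborel) = ennreal (Gamma a)"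
proof -
  have "(GG a has_integral Gamma a) {0..}"
    using Gamma_integral_real[OF assms] by (rule has_integral_eq[rotated]) (simp add: GG_def)
  then have "(GG a has_integral Gamma a) UNIV"
    by (rule has_integral_on_superset) (auto simp: GG_def)
  then have I: "(GG a has_integral Gamma a) UNIV" .
  show ?thesis
    using nn_integral_has_integral_lborel[OF GG_meas _ I] by (simp add: GG_def)
qed

lemma chi2_nn:
  assumes "k > 0"
  shows "(\<integral>\<^sup>+x. ennreal (chi2_density k x) \<partial>lborel) = 1"
proof -
  have G: "Gamma (k/2) > 0" using assms by (simp add: Gamma_real_pos)
  have "ennreal (Gamma (k/2)) = (\<integral>\<^sup>+x. ennreal (GG (k/2) x) \<partial>lborel)"
    using GG_nn[of "k/2"] assms by simp
  also have "\<dots> = ennreal \<bar>1/2\<bar> * (\<integral>\<^sup>+x. ennreal (GG (k/2) (0 + (1/2) * x)) \<partial>lborel)"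
    by (rule nn_integral_real_affine) auto
  finally have e0: "ennreal (Gamma (k/2)) = ennreal (1/2) * (\<integral>\<^sup>+x. ennreal (GG (k/2) (x/2)) \<partial>lborel)"
    by simp
  have "(\<integral>\<^sup>+x. ennreal (GG (k/2) (x/2)) \<partial>lborel) = ennreal 2 * (ennreal (1/2) * (\<integral>\<^sup>+x. ennreal (GG (k/2) (x/2)) \<partial>lborel))"
    using ennreal_mult[of 2 "1/2"] by (simp add: mult.assoc[symmetric])
  also have "\<dots> = ennreal (2 * Gamma (k/2))" using G by (simp only: e0[symmetric]) (simp add: ennreal_mult)
  finally have e: "(\<integral>\<^sup>+x. ennreal (GG (k/2) (x/2)) \<partial>lborel) = ennreal (2 * Gamma (k/2))" .
  have "(\<integral>\<^sup>+x. ennreal (chi2_density k x) \<partial>lborel)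
      = (\<integral>\<^sup>+x. ennreal (1 / (2 * Gamma (k/2))) * ennreal (GG (k/2) (x/2)) \<partial>lborel)"
    using G by (intro nn_integral_cong) (simp add: chi2_density_scale[OF assms] ennreal_mult[symmetric] GG_def)
  also have "\<dots> = ennreal (1 / (2 * Gamma (k/2))) * (\<integral>\<^sup>+x. ennreal (GG (k/2) (x/2)) \<partial>lborel)"
    by (rule nn_integral_cmult) measurable
  also have "\<dots> = 1" using G by (simp add: e ennreal_mult[symmetric])
  finally show ?thesis .
qed


lemma chi2_integrable: assumes "k > 0" shows "integrable lborel (chi2_density k)"
  by (rule integrableI_nn_integral_finite[where x=1]) (auto simp: chi2_density_nonneg chi2_nn assms)

lemma chi2_integral: "k > 0 \<Longrightarrow> integral\<^sup>L lborel (chi2_density k) = 1"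
  by (subst integral_eq_nn_integral) (auto simp: chi2_density_nonneg chi2_nn)

lemma chi2_set_integrable: "k > 0 \<Longrightarrow> A \<in> sets lborel \<Longrightarrow> set_integrable lborel A (chi2_density k)"
  unfolding set_integrable_def
  by (rule integrable_mult_indicator) (auto simp: chi2_integrable)

lemma chi2_CDF_eq: assumes "k > 0" shows "chi2_CDF k x = integral {0..x} (chi2_density k)"
proof -
  have "chi2_CDF k x = integral {..x} (chi2_density k)"
    unfolding chi2_CDF_def
    by (rule set_borel_integral_eq_integral(2)[OF chi2_set_integrable[OF assms]]) auto
  also have "\<dots> = integral UNIV (\<lambda>t. if t \<in> {..x} then chi2_density k t else 0)"
    by (rule integral_restrict_UNIV[symmetric])
  also have "\<dots> = integral UNIV (\<lambda>t. if t \<in> {0..x} then chi2_density k t else 0)"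
    by (rule arg_cong[where f="integral UNIV"]) (auto simp: chi2_density_def)
  also have "\<dots> = integral {0..x} (chi2_density k)"
    by (rule integral_restrict_UNIV)
  finally show ?thesis .
qed

lemma chi2_CDF_eq_fun: "k > 0 \<Longrightarrow> chi2_CDF k = (\<lambda>x. integral {0..x} (chi2_density k))"
  using chi2_CDF_eq by auto

lemma chi2_density_isCont: assumes "x > 0" "k > 0" shows "isCont (chi2_density k) x"
proof -
  have "continuous_on {0<..} (\<lambda>t. t powr (k/2 - 1) * exp (- t/2) / (2 powr (k/2) * Gamma (k/2)))"
    using Gamma_real_pos[of "k/2"] assms(2) by (intro continuous_intros) (auto simp del: Gamma_real_pos)
  then have "continuous_on {0<..} (chi2_density k)"
    by (rule continuous_on_cong[THEN iffD1, rotated 2]) (auto simp: chi2_density_def)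
  then show ?thesis using assms
    by (subst (asm) continuous_on_eq_continuous_at) auto
qed

lemma chi2_CDF_deriv:
  assumes "k > 0" "x > 0"
  shows "(chi2_CDF k has_real_derivative chi2_density k x) (at x)"
proof -
  have int: "chi2_density k integrable_on {0..x+1}"
    using set_borel_integral_eq_integral(1)[OF chi2_set_integrable[OF assms(1)]] by auto
  have "((\<lambda>u. integral {0..u} (chi2_density k)) has_vector_derivative chi2_density k x) (at x within ({0..x+1} - {}))"
    by (rule integral_has_vector_derivative_continuous_at[OF int])
       (use assms in \<open>auto intro: continuous_at_imp_continuous_within chi2_density_isCont\<close>)
  moreover have "at x within {0..x+1} = at x"
    by (rule at_within_interior) (use assms in auto)
  ultimately show ?thesis
    by (simp add: chi2_CDF_eq_fun[OF assms(1)] has_real_derivative_iff_has_vector_derivative)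
qed

lemma chi2_CDF_cont01: "k > 0 \<Longrightarrow> continuous_on {0..1} (chi2_CDF k)"
  by (simp add: chi2_CDF_eq_fun indefinite_integral_continuous_1
      set_borel_integral_eq_integral(1)[OF chi2_set_integrable])

lemma chi2_CDF_0: "k > 0 \<Longrightarrow> chi2_CDF k 0 = 0"
  by (simp add: chi2_CDF_eq)

lemma chi2_CDF_top: assumes "k > 0" shows "(chi2_CDF k \<longlongrightarrow> 1) at_top"
proof -
  have "((\<lambda>b. set_lebesgue_integral lborel {0..b} (chi2_density k)) \<longlongrightarrow> set_lebesgue_integral lborel {0..} (chi2_density k)) at_top"
    by (rule tendsto_set_lebesgue_integral_at_top) (auto simp: chi2_set_integrable assms)
  moreover have "set_lebesgue_integral lborel {0..} (chi2_density k) = 1"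
  proof -
    have "set_lebesgue_integral lborel {0..} (chi2_density k) = integral\<^sup>L lborel (chi2_density k)"
      unfolding set_lebesgue_integral_def
      by (rule Bochner_Integration.integral_cong) (auto simp: chi2_density_def indicator_def)
    then show ?thesis using chi2_integral[OF assms] by simp
  qed
  moreover have "\<forall>\<^sub>F b in at_top. set_lebesgue_integral lborel {0..b} (chi2_density k) = chi2_CDF k b"
    using eventually_ge_at_top[of 0]
  proof eventually_elim
    case (elim b)
    show ?case
      by (simp add: chi2_CDF_eq assms set_borel_integral_eq_integral(2)[OF chi2_set_integrable[OF assms]])
  qed
  ultimately show ?thesis using tendsto_cong by fastforce
qed


lemma my_inverse_strong_x:
  fixes f :: "real \<Rightarrow> real"
  shows  "\<lbrakk>DERIV f (g y) :> f'; f' \<noteq> 0; open S; continuous_on S f; g y \<in> S; f(g y) = y;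
           \<And>z. z \<in> S \<Longrightarrow> g (f z) = z\<rbrakk>
          \<Longrightarrow> DERIV g y :> inverse (f')"
  unfolding has_field_derivative_def
  by (rule has_derivative_inverse_strong_x [of S g y f]) auto

lemma chi2_density_pos: "k > 0 \<Longrightarrow> x > 0 \<Longrightarrow> chi2_density k x > 0"
  unfolding chi2_density_def using Gamma_real_pos[of "k/2"] by (auto simp del: Gamma_real_pos)

lemma chi2_surv_deriv:
  "k > 0 \<Longrightarrow> x > 0 \<Longrightarrow> (chi2_surv k has_real_derivative - chi2_density k x) (at x)"
  unfolding chi2_surv_def[abs_def]
  by (auto intro!: derivative_eq_intros chi2_CDF_deriv)

lemma chi2_CDF_strict: assumes "k > 0" "0 < x" "x < y" shows "chi2_CDF k x < chi2_CDF k y"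
proof (rule DERIV_pos_imp_increasing[OF assms(3)])
  fix t assume "x \<le> t" "t \<le> y"
  then have "t > 0" using assms by auto
  then show "\<exists>z. DERIV (chi2_CDF k) t :> z \<and> z > 0"
    using chi2_CDF_deriv[OF assms(1)] chi2_density_pos[OF assms(1)] by blast
qed

lemma chi2_surv_inj: assumes "k > 0" "0 < x" "0 < y" "chi2_surv k x = chi2_surv k y" shows "x = y"
  using chi2_CDF_strict[OF assms(1,2), of y] chi2_CDF_strict[OF assms(1,3), of x] assms(4)
  unfolding chi2_surv_def by (cases x y rule: linorder_cases) auto

lemma chi2_surv_inv_of: assumes "k > 0" "x > 0" shows "chi2_surv_inv k (chi2_surv k x) = x"
  unfolding chi2_surv_inv_def
  by (rule the_equality) (use assms chi2_surv_inj in auto)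

lemma chi2_surv_exists: assumes "k > 0" "0 < u" "u < 1" shows "\<exists>x>0. chi2_surv k x = u"
proof -
  obtain d where d: "d > 0" "\<forall>x'\<in>{0..1}. dist x' 0 < d \<longrightarrow> dist (chi2_CDF k x') (chi2_CDF k 0) < 1 - u"
    using chi2_CDF_cont01[OF assms(1)] assms unfolding continuous_on_iff
    by (metis atLeastAtMost_iff diff_gt_0_iff_gt order_refl zero_le_one)
  define a where "a = min (d/2) 1"
  have a: "a > 0" "a \<le> 1" "a < d" using d by (auto simp: a_def)
  have Fa: "chi2_CDF k a < 1 - u"
    using d(2)[rule_format, of a] a chi2_CDF_0[OF assms(1)] by (auto simp: dist_real_def)
  have "\<forall>\<^sub>F b in at_top. chi2_CDF k b > 1 - u"
    using chi2_CDF_top[OF assms(1)] assms by (intro order_tendstoD) auto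
  then obtain b0 where b0: "\<And>b. b \<ge> b0 \<Longrightarrow> chi2_CDF k b > 1 - u"
    by (auto simp: eventually_at_top_linorder)
  define b where "b = max b0 (a + 1)"
  have b: "b > a" "chi2_CDF k b > 1 - u" using b0[of b] by (auto simp: b_def)
  have cont: "continuous_on {a..b} (chi2_CDF k)"
    using a assms(1)
    by (intro continuous_at_imp_continuous_on ballI) (auto intro: DERIV_isCont[OF chi2_CDF_deriv])
  obtain x where "a \<le> x" "x \<le> b" "chi2_CDF k x = 1 - u"
    using IVT'[of "chi2_CDF k" a "1 - u" b, OF _ _ _ cont] Fa b by auto
  then show ?thesis using a by (intro exI[of _ x]) (auto simp: chi2_surv_def)
qed

lemma chi2_surv_inv: assumes "k > 0" "0 < u" "u < 1"
  shows "chi2_surv_inv k u > 0" "chi2_surv k (chi2_surv_inv k u) = u"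
proof -
  obtain x where x: "x > 0" "chi2_surv k x = u" using chi2_surv_exists[OF assms] by auto
  then have "chi2_surv_inv k u = x" using chi2_surv_inv_of[OF assms(1) x(1)] by simp
  then show "chi2_surv_inv k u > 0" "chi2_surv k (chi2_surv_inv k u) = u" using x by auto
qed

lemma chi2_surv_inv_anti: assumes "k > 0" "0 < u" "u \<le> v" "v < 1"
  shows "chi2_surv_inv k v \<le> chi2_surv_inv k u"
proof (rule ccontr)
  assume "\<not> ?thesis"
  then have "chi2_CDF k (chi2_surv_inv k u) < chi2_CDF k (chi2_surv_inv k v)"
    using assms chi2_surv_inv(1)[of k u] by (intro chi2_CDF_strict) auto
  then show False using chi2_surv_inv(2)[of k u] chi2_surv_inv(2)[of k v] assms
    unfolding chi2_surv_def by auto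
qed

lemma chi2_surv_inv_deriv: assumes "k > 0" "0 < u" "u < 1"
  shows "DERIV (chi2_surv_inv k) u :> inverse (- chi2_density k (chi2_surv_inv k u))"
proof (rule my_inverse_strong_x[where S="{0<..}"])
  show "DERIV (chi2_surv k) (chi2_surv_inv k u) :> - chi2_density k (chi2_surv_inv k u)"
    using chi2_surv_deriv chi2_surv_inv assms by auto
  show "- chi2_density k (chi2_surv_inv k u) \<noteq> 0"
    using chi2_density_pos chi2_surv_inv assms by (metis neg_0_equal_iff_equal order_less_irrefl)
  show "continuous_on {0<..} (chi2_surv k)"
    using assms(1) by (intro continuous_at_imp_continuous_on ballI) (auto intro: DERIV_isCont[OF chi2_surv_deriv])
qed (use assms chi2_surv_inv chi2_surv_inv_of in auto)


lemma ratio_formula: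
  fixes m h \<theta> x :: real
  assumes "m > 0" "h \<ge> 0" "\<theta> > 0" "x > 0"
  shows "\<theta> * chi2_density (m+h) (\<theta>*x) / chi2_density m x =
    (\<theta> * \<theta> powr ((m+h)/2 - 1) * (2 powr (m/2) * Gamma (m/2)) / (2 powr ((m+h)/2) * Gamma ((m+h)/2)))
    * (x powr (h/2) * exp ((1-\<theta>)*x/2))"
proof -
  have G1: "Gamma (m/2) > 0" "Gamma ((m+h)/2) > 0" using assms by auto
  have p1: "(\<theta>*x) powr ((m+h)/2 - 1) = \<theta> powr ((m+h)/2 - 1) * (x powr (h/2) * x powr (m/2 - 1))"
  proof -
    have eq: "(m+h)/2 - 1 = h/2 + (m/2 - 1)" by (simp add: field_simps)
    have "x powr ((m+h)/2 - 1) = x powr (h/2) * x powr (m/2 - 1)" by (simp only: eq powr_add)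
    then show ?thesis using assms by (simp add: powr_mult)
  qed
  have e1: "exp (- (\<theta>*x)/2) = exp ((1-\<theta>)*x/2) * exp (- x/2)"
    by (simp add: exp_add[symmetric] field_simps)
  have "x powr (m/2 - 1) > 0" "exp (-x/2) > 0" using assms by auto
  moreover have d1: "chi2_density (m+h) (\<theta>*x) = (\<theta>*x) powr ((m+h)/2 - 1) * exp (- (\<theta>*x)/2) / (2 powr ((m+h)/2) * Gamma ((m+h)/2))"
    unfolding chi2_density_def using assms by simp
  moreover have d2: "chi2_density m x = x powr (m/2 - 1) * exp (- x/2) / (2 powr (m/2) * Gamma (m/2))"
    unfolding chi2_density_def using assms by simp
  ultimately show ?thesis
    using assms G1 unfolding d1 d2 p1 e1
    by (simp add: field_simps)
qed

theorem mainTheorem6: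
  fixes m h \<theta> :: real
  assumes "m > 0" and "h \<ge> 0" and "\<theta> > 0"
  defines "g \<equiv> (\<lambda>u. chi2_surv (m + h) (\<theta> * chi2_surv_inv m u))"
  shows "(\<theta> \<le> 1 \<longrightarrow> concave_on {0<..<1} g) \<and>
         (\<theta> > 1 \<and> h = 0 \<longrightarrow> convex_on {0<..<1} g)"
proof -
  define K where "K = (\<theta> * \<theta> powr ((m+h)/2 - 1) * (2 powr (m/2) * Gamma (m/2)) / (2 powr ((m+h)/2) * Gamma ((m+h)/2)))"
  define r where "r = (\<lambda>x. K * (x powr (h/2) * exp ((1-\<theta>)*x/2)))"
  define X where "X = chi2_surv_inv m"
  have K: "K > 0" unfolding K_def using assms by (auto intro!: mult_pos_pos divide_pos_pos)
  have der: "DERIV g u :> r (X u)" if u: "u \<in> {0<..<1}" for u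
  proof -
    have x: "X u > 0" using chi2_surv_inv(1)[OF assms(1)] u by (auto simp: X_def)
    have "DERIV g u :> (- chi2_density (m+h) (\<theta> * X u)) * (\<theta> * inverse (- chi2_density m (X u)))"
      unfolding g_def X_def
      by (rule DERIV_chain2[OF chi2_surv_deriv DERIV_cmult[OF chi2_surv_inv_deriv]])
         (use assms u x[unfolded X_def] in auto)
    also have "(- chi2_density (m+h) (\<theta> * X u)) * (\<theta> * inverse (- chi2_density m (X u)))
        = \<theta> * chi2_density (m+h) (\<theta> * X u) / chi2_density m (X u)"
      by (simp add: field_simps)
    also have "\<dots> = r (X u)" unfolding r_def K_def by (rule ratio_formula) (use assms x in auto)
    finally show ?thesis .
  qed
  have anti: "X v \<le> X u" if "u \<in> {0<..<1}" "v \<in> {0<..<1}" "u \<le> v" for u v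
    using chi2_surv_inv_anti[OF assms(1)] that by (auto simp: X_def)
  have pos: "X u > 0" if "u \<in> {0<..<1}" for u
    using chi2_surv_inv(1)[OF assms(1)] that by (auto simp: X_def)
  have C1: "concave_on {0<..<1} g" if th: "\<theta> \<le> 1"
  proof -
    have mono: "r x \<le> r y" if "0 < x" "x \<le> y" for x y
      unfolding r_def using K that th assms(2)
      by (intro mult_left_mono mult_mono powr_mono2) (auto simp: mult_right_mono mult_left_mono)
    have "convex_on {0<..<1} (\<lambda>u. - g u)"
      by (rule convex_on_realI[where f'="\<lambda>u. - r (X u)"])
         (auto intro!: derivative_eq_intros der mono anti pos simp: connected_Ioo)
    then show ?thesis by (simp add: concave_on_def)
  qed
  have C2: "convex_on {0<..<1} g" if th: "\<theta> > 1" "h = 0"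
  proof -
    have mono: "r y \<le> r x" if "0 < x" "x \<le> y" for x y
      unfolding r_def using K that th by (auto simp: mult_right_mono)
    show ?thesis
      by (rule convex_on_realI[where f'="\<lambda>u. r (X u)"])
         (auto intro!: der mono anti pos simp: connected_Ioo)
  qed
  show ?thesis using C1 C2 by auto
qed

end
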